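(* Let $S$ be a $C^1$-differentiable semigroup in which idempotents commute pairwise. Then the set $E(S)$ of idempotents is discrete in the subspace topology.
   Context: A $C^1$-differentiable semigroup is a topological semigroup $S$ which is a $C^1$ manifold modelled on a Banach space and whose multiplication $S\times S\to S$ is of class $C^1$. $E(S)=\{e: e^2=e\}$. For an idempotent $f$, $G_f$ denotes the maximal subgroup of $S$ containing $f$ (the largest subgroup of $S$ with identity $f$); distinct idempotents have disjoint maximal subgroups. Known fact (Holmes) that may be used: for every $e\in E(S)$ there is an open neighbourhood $U_e$ of $e$ such that $fxf\in G_f$ for all $f\in E(S)\cap U_e$ and all $x\in U_e$. *)

theory Defs
  imports "HOL-Analysis.Analysis"
begin

definition C1_on :: "'b::real_normed_vector set \<Rightarrow> ('b \<Rightarrow> 'c::real_normed_vector) \<Rightarrow> bool" where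
  "C1_on U f \<longleftrightarrow> open U \<and>
     (\<exists>f' :: 'b \<Rightarrow> ('b \<Rightarrow>\<^sub>L 'c).
        (\<forall>x\<in>U. (f has_derivative blinfun_apply (f' x)) (at x)) \<and> continuous_on U f')"

definition is_chart :: "'a::topological_space set \<times> ('a \<Rightarrow> 'b::real_normed_vector) \<Rightarrow> bool" where
  "is_chart c \<longleftrightarrow> (case c of (U, \<phi>) \<Rightarrow>
     open U \<and> open (\<phi> ` U) \<and> inj_on \<phi> U \<and> continuous_on U \<phi> \<and>
     continuous_on (\<phi> ` U) (inv_into U \<phi>))"

definition C1_atlas :: "('a::topological_space set \<times> ('a \<Rightarrow> 'b::banach)) set \<Rightarrow> bool" where
  "C1_atlas A \<longleftrightarrow>
     (\<forall>c\<in>A. is_chart c) \<and> (\<Union>c\<in>A. fst c) = UNIV \<and>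
     (\<forall>(U, \<phi>)\<in>A. \<forall>(V, \<psi>)\<in>A. C1_on (\<phi> ` (U \<inter> V)) (\<psi> \<circ> inv_into U \<phi>))"

definition C1_semigroup :: "('a::{topological_space, semigroup_mult} set \<times> ('a \<Rightarrow> 'b::banach)) set \<Rightarrow> bool" where
  "C1_semigroup A \<longleftrightarrow>
     C1_atlas A \<and>
     continuous_on UNIV (\<lambda>p::'a \<times> 'a. fst p * snd p) \<and>
     (\<forall>(U1, \<phi>1)\<in>A. \<forall>(U2, \<phi>2)\<in>A. \<forall>(V, \<psi>)\<in>A.
        C1_on {p \<in> (\<phi>1 ` U1) \<times> (\<phi>2 ` U2). inv_into U1 \<phi>1 (fst p) * inv_into U2 \<phi>2 (snd p) \<in> V}
              (\<lambda>p. \<psi> (inv_into U1 \<phi>1 (fst p) * inv_into U2 \<phi>2 (snd p))))"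

definition idempotents :: "'a::semigroup_mult set" where
  "idempotents = {e. e * e = e}"

end

theory Submission imports Defs begin

lemma pair_in_ball:
  fixes a x b :: "'b::real_normed_vector"
  assumes "dist a x < r" "dist a b < r"
  shows "(x, b) \<in> ball (a, a) (2*r)"
proof -
  have "dist (a,a) (x,b) \<le> dist a x + dist a b"
    unfolding dist_Pair_Pair using sqrt_sum_squares_le_sum_abs[of "dist a x" "dist a b"] by simp
  then show ?thesis using assms by simp
qed

lemma mixed_diff:
  fixes M :: "'b::banach \<times> 'b \<Rightarrow> 'b" and M' :: "'b \<times> 'b \<Rightarrow> (('b \<times> 'b) \<Rightarrow>\<^sub>L 'b)"
  assumes der: "\<And>p. p \<in> ball (a,a) (2*r) \<Longrightarrow> (M has_derivative blinfun_apply (M' p)) (at p)"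
    and cl: "\<And>p. p \<in> ball (a,a) (2*r) \<Longrightarrow> norm (M' p - M' (a,a)) \<le> 1/4"
    and b: "dist a b < r"
  shows "norm (M (b,b) - M (a,b) - M (b,a) + M (a,a)) \<le> 1/2 * norm (b - a)"
proof -
  define H where "H x = M (x,b) - M (x,a)" for x
  define H' where "H' x = (\<lambda>h. blinfun_apply (M' (x,b)) (h,0) - blinfun_apply (M' (x,a)) (h,0))" for x
  have r: "r > 0" using b zero_le_dist[of a b] by linarith
  have a_in: "a \<in> ball a r" using r by simp
  have b_in: "b \<in> ball a r" using b by simp
  have dH: "(H has_derivative H' x) (at x within ball a r)" if "x \<in> ball a r" for x
  proof -
    have p1: "(x,b) \<in> ball (a,a) (2*r)" using pair_in_ball that b by simp
    have p2: "(x,a) \<in> ball (a,a) (2*r)" using pair_in_ball[of a x r a] that r by simp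
    have i1: "((\<lambda>x. (x,b)) has_derivative (\<lambda>h. (h,0))) (at x)"
      by (auto intro!: derivative_eq_intros)
    have i2: "((\<lambda>x. (x,a)) has_derivative (\<lambda>h. (h,0))) (at x)"
      by (auto intro!: derivative_eq_intros)
    have c1: "((\<lambda>x. M (x,b)) has_derivative (\<lambda>h. blinfun_apply (M' (x,b)) (h,0))) (at x)"
      using has_derivative_compose[OF i1 der[OF p1]] by (simp add: o_def)
    have c2: "((\<lambda>x. M (x,a)) has_derivative (\<lambda>h. blinfun_apply (M' (x,a)) (h,0))) (at x)"
      using has_derivative_compose[OF i2 der[OF p2]] by (simp add: o_def)
    have "(H has_derivative H' x) (at x)"
      unfolding H_def[abs_def] H'_def using has_derivative_diff[OF c1 c2] by simp
    then show ?thesis by (rule has_derivative_at_withinI)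
  qed
  have bnd: "onorm (H' x) \<le> 1/2" if "x \<in> ball a r" for x
  proof (rule onorm_bound)
    show "0 \<le> (1/2::real)" by simp
    fix h
    have p1: "(x,b) \<in> ball (a,a) (2*r)" using pair_in_ball that b by simp
    have p2: "(x,a) \<in> ball (a,a) (2*r)" using pair_in_ball[of a x r a] that r by simp
    have "H' x h = blinfun_apply (M' (x,b) - M' (x,a)) (h,0)"
      by (simp add: H'_def blinfun.diff_left)
    also have "norm \<dots> \<le> norm (M' (x,b) - M' (x,a)) * norm (h, 0::'b)"
      by (rule norm_blinfun)
    also have "norm (h, 0::'b) = norm h" by (simp add: norm_Pair)
    also have "norm (M' (x,b) - M' (x,a)) \<le> norm (M' (x,b) - M' (a,a)) + norm (M' (x,a) - M' (a,a))"
      by (metis norm_diff_triangle_le norm_minus_commute order_refl)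
    also have "\<dots> \<le> 1/2" using cl[OF p1] cl[OF p2] by simp
    finally show "norm (H' x h) \<le> 1/2 * norm h"
      by (simp add: mult_right_mono)
  qed
  have "norm (H b - H a) \<le> 1/2 * norm (b - a)"
    by (rule differentiable_bound[OF convex_ball dH bnd b_in a_in])
  then show ?thesis unfolding H_def by (simp add: algebra_simps)
qed

theorem corollary6p3:
  fixes A :: "('a::{topological_space, semigroup_mult} set \<times> ('a \<Rightarrow> 'b::banach)) set"
  assumes "C1_semigroup A"
    and "\<forall>e\<in>idempotents. \<forall>f\<in>idempotents. e * f = f * (e::'a)"
  shows "discrete (idempotents :: 'a set)"
proof (rule discreteI)
  fix e :: 'a
  assume eI: "e \<in> idempotents"
  have ee: "e * e = e" using eI by (simp add: idempotents_def)
  have atlas: "C1_atlas A" and contm: "continuous_on UNIV (\<lambda>p::'a \<times> 'a. fst p * snd p)"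
    and smooth: "\<forall>(U1, \<phi>1)\<in>A. \<forall>(U2, \<phi>2)\<in>A. \<forall>(V, \<psi>)\<in>A.
        C1_on {p \<in> (\<phi>1 ` U1) \<times> (\<phi>2 ` U2). inv_into U1 \<phi>1 (fst p) * inv_into U2 \<phi>2 (snd p) \<in> V}
              (\<lambda>p. \<psi> (inv_into U1 \<phi>1 (fst p) * inv_into U2 \<phi>2 (snd p)))"
    using assms(1) unfolding C1_semigroup_def by auto
  have "e \<in> (\<Union>c\<in>A. fst c)" using atlas unfolding C1_atlas_def by auto
  then obtain U \<phi> where UA: "(U, \<phi>) \<in> A" and eU: "e \<in> U" by auto
  have "is_chart (U, \<phi>)" using atlas UA unfolding C1_atlas_def by auto
  then have oU: "open U" and inj: "inj_on \<phi> U" and cphi: "continuous_on U \<phi>"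
    unfolding is_chart_def by auto
  define \<psi> where "\<psi> = inv_into U \<phi>"
  have psi: "\<psi> (\<phi> x) = x" if "x \<in> U" for x
    using inj that by (simp add: \<psi>_def)
  define D where "D = {p \<in> (\<phi> ` U) \<times> (\<phi> ` U). \<psi> (fst p) * \<psi> (snd p) \<in> U}"
  define M where "M p = \<phi> (\<psi> (fst p) * \<psi> (snd p))" for p
  have "C1_on D M" using smooth UA unfolding D_def M_def \<psi>_def by fast
  then obtain M' :: "'b \<times> 'b \<Rightarrow> (('b \<times> 'b) \<Rightarrow>\<^sub>L 'b)" where oD: "open D"
    and dM: "\<And>p. p \<in> D \<Longrightarrow> (M has_derivative blinfun_apply (M' p)) (at p)"
    and cM: "continuous_on D M'"
    unfolding C1_on_def by blast
  define a where "a = \<phi> e"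
  have aD: "(a, a) \<in> D" unfolding D_def a_def using eU psi ee by auto
  obtain d1 where d1: "d1 > 0" "\<And>p. p \<in> D \<Longrightarrow> dist p (a,a) < d1 \<Longrightarrow> dist (M' p) (M' (a,a)) < 1/4"
    using cM aD unfolding continuous_on_iff by (meson zero_less_divide_1_iff zero_less_numeral)
  obtain d2 where d2: "d2 > 0" "ball (a,a) d2 \<subseteq> D"
    using oD aD open_contains_ball by blast
  define r where "r = min d1 d2 / 2"
  have r: "r > 0" using d1 d2 by (simp add: r_def)
  have ballD: "ball (a,a) (2*r) \<subseteq> D" using d2 unfolding r_def by auto
  have der: "(M has_derivative blinfun_apply (M' p)) (at p)" if "p \<in> ball (a,a) (2*r)" for p
    using dM ballD that by blast
  have cl: "norm (M' p - M' (a,a)) \<le> 1/4" if "p \<in> ball (a,a) (2*r)" for p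
  proof -
    have "p \<in> D" using ballD that by blast
    moreover have "dist p (a,a) < d1" using that unfolding r_def by (auto simp: dist_commute)
    ultimately show ?thesis using d1(2) by (simp add: dist_norm less_imp_le)
  qed
  have K: "f = e" if fU: "f \<in> U" and ff: "f * f = f" and fr: "dist a (\<phi> f) < r"
    and rel: "(e * f = f \<and> f * e = f) \<or> (e * f = e \<and> f * e = e)" for f
  proof -
    define b where "b = \<phi> f"
    have md: "norm (M (b,b) - M (a,b) - M (b,a) + M (a,a)) \<le> 1/2 * norm (b - a)"
      using mixed_diff[of a r M M' b, OF der cl] fr unfolding b_def by blast
    have Mbb: "M (b,b) = b" unfolding M_def b_def using psi fU ff by simp
    have Maa: "M (a,a) = a" unfolding M_def a_def using psi eU ee by simp
    have Mab: "M (a,b) = \<phi> (e * f)" unfolding M_def a_def b_def using psi eU fU by simp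
    have Mba: "M (b,a) = \<phi> (f * e)" unfolding M_def a_def b_def using psi eU fU by simp
    have "norm (M (b,b) - M (a,b) - M (b,a) + M (a,a)) = norm (b - a)"
      using rel
    proof
      assume "e * f = f \<and> f * e = f"
      then show ?thesis unfolding Mbb Maa Mab Mba by (simp add: b_def[symmetric] norm_minus_commute)
    next
      assume "e * f = e \<and> f * e = e"
      then show ?thesis unfolding Mbb Maa Mab Mba by (simp add: a_def[symmetric])
    qed
    with md have "norm (b - a) = 0" by simp
    then have "b = a" by simp
    then show "f = e" using psi fU eU unfolding a_def b_def by metis
  qed
  define W0 where "W0 = \<phi> -` ball a r \<inter> U"
  have oW0: "open W0" using cphi oU unfolding W0_def continuous_on_open_vimage[OF oU] by auto
  have cl2: "continuous_on UNIV (\<lambda>x::'a. e * x)"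
  proof -
    have "continuous_on UNIV (\<lambda>x::'a. fst (e, x) * snd (e, x))"
      by (rule continuous_on_compose2[OF contm]) (auto intro!: continuous_intros)
    then show ?thesis by simp
  qed
  define W where "W = W0 \<inter> (\<lambda>x. e * x) -` W0"
  have oW: "open W" unfolding W_def using oW0 cl2 open_vimage by (metis open_Int)
  have eW0: "e \<in> W0" unfolding W0_def a_def using eU r by simp
  have eW: "e \<in> W" unfolding W_def using eW0 ee by simp
  show "e isolated_in idempotents"
  proof (rule isolated_inI[OF eI oW])
    show "W \<inter> idempotents = {e}"
    proof
      show "{e} \<subseteq> W \<inter> idempotents" using eW eI by simp
      show "W \<inter> idempotents \<subseteq> {e}"
      proof
        fix f assume fW: "f \<in> W \<inter> idempotents"
        have ff: "f * f = f" using fW by (simp add: idempotents_def)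
        have comm: "e * f = f * e" using assms(2) eI fW by blast
        have fW0: "f \<in> W0" and gW0: "e * f \<in> W0" using fW unfolding W_def by auto
        define g where "g = e * f"
        have gg: "g * g = g" unfolding g_def
          by (metis comm ee ff mult.assoc)
        have eg: "e * g = g" unfolding g_def by (metis ee mult.assoc)
        have ge: "g * e = g" unfolding g_def by (metis comm ee mult.assoc)
        have "g = e"
          using K[of g] gW0 gg eg ge unfolding g_def W0_def by (simp add: g_def)
        then have "e * f = e" "f * e = e" using comm unfolding g_def by auto
        then have "f = e" using K[of f] fW0 ff unfolding W0_def by simp
        then show "f \<in> {e}" by simp
      qed
    qed
  qed
qed

end
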